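(* Let $(I,\preccurlyeq)$ be a directed set, let $S(\Lambda^{\preccurlyeq})$ be a direct spectrum over $(I,\preccurlyeq)$ with sets $\lambda_0(i)$, transports $\lambda^{\preccurlyeq}_{ij}$ and Bishop spaces $\mathcal F_i=(\lambda_0(i),F_i)$, and let $\mathcal F=(X,F)$ be a Bishop space. Let $S(\Lambda^{\preccurlyeq})\to\mathcal F$ be the contravariant direct spectrum over $(I,\preccurlyeq)$ with sets $\mathrm{Mor}(\mathcal F_i,\mathcal F)$, transports $(\lambda^{\preccurlyeq}_{ij})^+:\mathrm{Mor}(\mathcal F_j,\mathcal F)\to\mathrm{Mor}(\mathcal F_i,\mathcal F)$, $\phi\mapsto\phi\circ\lambda^{\preccurlyeq}_{ij}$ (for $i\preccurlyeq j$), and Bishop spaces $\mathcal F_i\to\mathcal F$. Then $\underset{\leftarrow}{\mathrm{Lim}}\,(\mathcal F_i\to\mathcal F)\simeq(\underset{\to}{\mathrm{Lim}}\,\mathcal F_i)\to\mathcal F$.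
   Context: Work in Bishop-style constructive mathematics. A directed set: a set with a reflexive transitive relation respecting equality, any two elements having a common upper bound. A direct family over $(I,\preccurlyeq)$: sets $\lambda_0(i)$ and functions $\lambda^{\preccurlyeq}_{ij}:\lambda_0(i)\to\lambda_0(j)$ for $i\preccurlyeq j$ with $\lambda^{\preccurlyeq}_{ii}=\mathrm{id}$ and $\lambda^{\preccurlyeq}_{ik}=\lambda^{\preccurlyeq}_{jk}\circ\lambda^{\preccurlyeq}_{ij}$. A contravariant direct family: sets $\mu_0(i)$ and functions $\mu^{\succcurlyeq}_{ji}:\mu_0(j)\to\mu_0(i)$ for $i\preccurlyeq j$ with $\mu^{\succcurlyeq}_{ii}=\mathrm{id}$, $\mu^{\succcurlyeq}_{ki}=\mu^{\succcurlyeq}_{ji}\circ\mu^{\succcurlyeq}_{kj}$. Bishop spaces: a Bishop topology on $X$ is a set $F$ of functions $X\to\mathbb R$ containing constants, closed under addition, composition with functions $\mathbb R\to\mathbb R$ uniformly continuous on every $[-n,n]$, and uniform limits; $\bigvee F_0$ = least Bishop topology containing $F_0$; Bishop morphism $(X,F)\to(Y,G)$: a function $h$ with $g\circ h\in F$ for all $g\in G$; Bishop isomorphism: bijective morphism with morphism inverse; $\simeq$: Bishop isomorphic. Exponential: $\mathcal F\to\mathcal G=(\mathrm{Mor}(\mathcal F,\mathcal G),\bigvee\{\phi_{x,g}:x\in X,g\in G\})$, $\phi_{x,g}(h)=g(h(x))$. A (contravariant) direct spectrum: a (contravariant) direct family with Bishop topologies on each set making all transports Bishop morphisms. Direct limit: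 $\sum^{\preccurlyeq}\lambda_0(i)$ = pairs $(i,x)$ with $(i,x)=(j,y)$ iff there is $k\succcurlyeq i,j$ with $\lambda^{\preccurlyeq}_{ik}(x)=\lambda^{\preccurlyeq}_{jk}(y)$; $\prod^{\succcurlyeq}F_i$ = dependent assignments $\Theta$ with $\Theta_i\in F_i$ and $\Theta_i=\Theta_j\circ\lambda^{\preccurlyeq}_{ij}$ for $i\preccurlyeq j$; $\underset{\to}{\mathrm{Lim}}\,\lambda_0(i)$ = classes $\mathrm{eql}_0(i,x)$ under that equality; $\mathrm{eql}_0f_\Theta(\mathrm{eql}_0(i,x))=\Theta_i(x)$; $\underset{\to}{\mathrm{Lim}}\,\mathcal F_i=(\underset{\to}{\mathrm{Lim}}\,\lambda_0(i),\bigvee\{\mathrm{eql}_0f_\Theta:\Theta\in\prod^{\succcurlyeq}F_i\})$. Inverse limit of a contravariant spectrum with sets $\mu_0(i)$, transports $\mu^{\succcurlyeq}_{ji}$, topologies $G_i$: $\prod^{\succcurlyeq}\mu_0(i)$ = dependent assignments $\Phi$ with $\Phi_i\in\mu_0(i)$, $\Phi_i=\mu^{\succcurlyeq}_{ji}(\Phi_j)$ for $i\preccurlyeq j$ (pointwise equality); $\pi_i(\Phi)=\Phi_i$; $\underset{\leftarrow}{\mathrm{Lim}}\,\mathcal G_i=(\prod^{\succcurlyeq}\mu_0(i),\bigvee\{g\circ\pi_i:i\in I,g\in G_i\})$. *)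

theory Defs
  imports Complex_Main "HOL-Library.FuncSet"
begin

text \<open>Functions on X are represented extensionally
(value undefined outside X), so that equality of functions is pointwise on X.\<close>

definition bishop_cont :: "(real \<Rightarrow> real) \<Rightarrow> bool" where
  "bishop_cont \<phi> \<longleftrightarrow> (\<forall>n::nat. uniformly_continuous_on {- real n .. real n} \<phi>)"

definition bishop_topology :: "'a set \<Rightarrow> ('a \<Rightarrow> real) set \<Rightarrow> bool" where
  "bishop_topology X F \<longleftrightarrow>
     F \<subseteq> extensional X \<and>
     (\<forall>c. (\<lambda>x\<in>X. c) \<in> F) \<and>
     (\<forall>f\<in>F. \<forall>g\<in>F. (\<lambda>x\<in>X. f x + g x) \<in> F) \<and>
     (\<forall>f\<in>F. \<forall>\<phi>. bishop_cont \<phi> \<longrightarrow> (\<lambda>x\<in>X. \<phi> (f x)) \<in> F) \<and>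
     (\<forall>f. f \<in> extensional X \<and> (\<forall>e>0. \<exists>g\<in>F. \<forall>x\<in>X. \<bar>f x - g x\<bar> \<le> e) \<longrightarrow> f \<in> F)"

definition bigvee :: "'a set \<Rightarrow> ('a \<Rightarrow> real) set \<Rightarrow> ('a \<Rightarrow> real) set" where
  "bigvee X F0 = \<Inter>{F. bishop_topology X F \<and> F0 \<subseteq> F}"

definition bmor :: "'a set \<Rightarrow> ('a \<Rightarrow> real) set \<Rightarrow> 'b set \<Rightarrow> ('b \<Rightarrow> real) set \<Rightarrow> ('a \<Rightarrow> 'b) set" where
  "bmor X F Y G = {h. h \<in> X \<rightarrow>\<^sub>E Y \<and> (\<forall>g\<in>G. (\<lambda>x\<in>X. g (h x)) \<in> F)}"

definition bishop_iso :: "'a set \<Rightarrow> ('a \<Rightarrow> real) set \<Rightarrow> 'b set \<Rightarrow> ('b \<Rightarrow> real) set \<Rightarrow> ('a \<Rightarrow> 'b) \<Rightarrow> bool" where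
  "bishop_iso X F Y G h \<longleftrightarrow>
     h \<in> bmor X F Y G \<and> bij_betw h X Y \<and> (\<lambda>y\<in>Y. inv_into X h y) \<in> bmor Y G X F"

definition bishop_isomorphic :: "'a set \<Rightarrow> ('a \<Rightarrow> real) set \<Rightarrow> 'b set \<Rightarrow> ('b \<Rightarrow> real) set \<Rightarrow> bool" where
  "bishop_isomorphic X F Y G \<longleftrightarrow> (\<exists>h. bishop_iso X F Y G h)"

definition exp_top :: "'a set \<Rightarrow> ('a \<Rightarrow> real) set \<Rightarrow> 'b set \<Rightarrow> ('b \<Rightarrow> real) set \<Rightarrow> (('a \<Rightarrow> 'b) \<Rightarrow> real) set" where
  "exp_top X F Y G = bigvee (bmor X F Y G)
     {(\<lambda>h\<in>bmor X F Y G. g (h x)) | x g. x \<in> X \<and> g \<in> G}"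

text \<open>Directed sets (equality is HOL equality, so respecting equality is automatic).\<close>
definition directed_set :: "'i set \<Rightarrow> ('i \<Rightarrow> 'i \<Rightarrow> bool) \<Rightarrow> bool" where
  "directed_set I le \<longleftrightarrow>
     (\<forall>i\<in>I. le i i) \<and>
     (\<forall>i\<in>I. \<forall>j\<in>I. \<forall>k\<in>I. le i j \<and> le j k \<longrightarrow> le i k) \<and>
     (\<forall>i\<in>I. \<forall>j\<in>I. \<exists>k\<in>I. le i k \<and> le j k)"

definition direct_family :: "'i set \<Rightarrow> ('i \<Rightarrow> 'i \<Rightarrow> bool) \<Rightarrow> ('i \<Rightarrow> 'a set) \<Rightarrow> ('i \<Rightarrow> 'i \<Rightarrow> 'a \<Rightarrow> 'a) \<Rightarrow> bool" where
  "direct_family I le lam0 lam \<longleftrightarrow>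
     (\<forall>i\<in>I. \<forall>j\<in>I. le i j \<longrightarrow> lam i j \<in> lam0 i \<rightarrow>\<^sub>E lam0 j) \<and>
     (\<forall>i\<in>I. lam i i = (\<lambda>x\<in>lam0 i. x)) \<and>
     (\<forall>i\<in>I. \<forall>j\<in>I. \<forall>k\<in>I. le i j \<and> le j k \<longrightarrow>
        lam i k = (\<lambda>x\<in>lam0 i. lam j k (lam i j x)))"

definition direct_spectrum :: "'i set \<Rightarrow> ('i \<Rightarrow> 'i \<Rightarrow> bool) \<Rightarrow> ('i \<Rightarrow> 'a set) \<Rightarrow> ('i \<Rightarrow> 'i \<Rightarrow> 'a \<Rightarrow> 'a)
     \<Rightarrow> ('i \<Rightarrow> ('a \<Rightarrow> real) set) \<Rightarrow> bool" where
  "direct_spectrum I le lam0 lam F \<longleftrightarrow>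
     direct_family I le lam0 lam \<and>
     (\<forall>i\<in>I. bishop_topology (lam0 i) (F i)) \<and>
     (\<forall>i\<in>I. \<forall>j\<in>I. le i j \<longrightarrow> lam i j \<in> bmor (lam0 i) (F i) (lam0 j) (F j))"

definition dl_rel :: "'i set \<Rightarrow> ('i \<Rightarrow> 'i \<Rightarrow> bool) \<Rightarrow> ('i \<Rightarrow> 'a set) \<Rightarrow> ('i \<Rightarrow> 'i \<Rightarrow> 'a \<Rightarrow> 'a)
     \<Rightarrow> (('i \<times> 'a) \<times> ('i \<times> 'a)) set" where
  "dl_rel I le lam0 lam = {((i, x), (j, y)). (i, x) \<in> Sigma I lam0 \<and> (j, y) \<in> Sigma I lam0 \<and>
     (\<exists>k\<in>I. le i k \<and> le j k \<and> lam i k x = lam j k y)}"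

definition dirlim_carrier :: "'i set \<Rightarrow> ('i \<Rightarrow> 'i \<Rightarrow> bool) \<Rightarrow> ('i \<Rightarrow> 'a set) \<Rightarrow> ('i \<Rightarrow> 'i \<Rightarrow> 'a \<Rightarrow> 'a)
     \<Rightarrow> ('i \<times> 'a) set set" where
  "dirlim_carrier I le lam0 lam = Sigma I lam0 // dl_rel I le lam0 lam"

definition dprod_top :: "'i set \<Rightarrow> ('i \<Rightarrow> 'i \<Rightarrow> bool) \<Rightarrow> ('i \<Rightarrow> 'a set) \<Rightarrow> ('i \<Rightarrow> 'i \<Rightarrow> 'a \<Rightarrow> 'a)
     \<Rightarrow> ('i \<Rightarrow> ('a \<Rightarrow> real) set) \<Rightarrow> ('i \<Rightarrow> 'a \<Rightarrow> real) set" where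
  "dprod_top I le lam0 lam F = {\<Theta>. (\<forall>i\<in>I. \<Theta> i \<in> F i) \<and>
     (\<forall>i\<in>I. \<forall>j\<in>I. le i j \<longrightarrow> \<Theta> i = (\<lambda>x\<in>lam0 i. \<Theta> j (lam i j x)))}"

text \<open>eql0 f_Theta (eql0 (i,x)) = Theta_i x.\<close>
definition eql_f :: "('i \<times> 'a) set set \<Rightarrow> ('i \<Rightarrow> 'a \<Rightarrow> real) \<Rightarrow> ('i \<times> 'a) set \<Rightarrow> real" where
  "eql_f C \<Theta> = (\<lambda>c\<in>C. the_elem ((\<lambda>(i, x). \<Theta> i x) ` c))"

definition dirlim_top :: "'i set \<Rightarrow> ('i \<Rightarrow> 'i \<Rightarrow> bool) \<Rightarrow> ('i \<Rightarrow> 'a set) \<Rightarrow> ('i \<Rightarrow> 'i \<Rightarrow> 'a \<Rightarrow> 'a)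
     \<Rightarrow> ('i \<Rightarrow> ('a \<Rightarrow> real) set) \<Rightarrow> (('i \<times> 'a) set \<Rightarrow> real) set" where
  "dirlim_top I le lam0 lam F = bigvee (dirlim_carrier I le lam0 lam)
     {eql_f (dirlim_carrier I le lam0 lam) \<Theta> | \<Theta>. \<Theta> \<in> dprod_top I le lam0 lam F}"

text \<open>Inverse limit of a contravariant direct spectrum with sets mu0 i,
transports mu j i : mu0 j \<rightarrow> mu0 i (i \<preccurlyeq> j) and topologies G i.\<close>
definition invlim_carrier :: "'i set \<Rightarrow> ('i \<Rightarrow> 'i \<Rightarrow> bool) \<Rightarrow> ('i \<Rightarrow> 'b set) \<Rightarrow> ('i \<Rightarrow> 'i \<Rightarrow> 'b \<Rightarrow> 'b)
     \<Rightarrow> ('i \<Rightarrow> 'b) set" where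
  "invlim_carrier I le mu0 mu = {\<Phi>. \<Phi> \<in> (\<Pi>\<^sub>E i\<in>I. mu0 i) \<and>
     (\<forall>i\<in>I. \<forall>j\<in>I. le i j \<longrightarrow> \<Phi> i = mu j i (\<Phi> j))}"

definition invlim_top :: "'i set \<Rightarrow> ('i \<Rightarrow> 'i \<Rightarrow> bool) \<Rightarrow> ('i \<Rightarrow> 'b set) \<Rightarrow> ('i \<Rightarrow> 'i \<Rightarrow> 'b \<Rightarrow> 'b)
     \<Rightarrow> ('i \<Rightarrow> ('b \<Rightarrow> real) set) \<Rightarrow> (('i \<Rightarrow> 'b) \<Rightarrow> real) set" where
  "invlim_top I le mu0 mu G = bigvee (invlim_carrier I le mu0 mu)
     {(\<lambda>\<Phi>\<in>invlim_carrier I le mu0 mu. g (\<Phi> i)) | i g. i \<in> I \<and> g \<in> G i}"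

definition to_mor0 :: "('i \<Rightarrow> 'a set) \<Rightarrow> ('i \<Rightarrow> ('a \<Rightarrow> real) set) \<Rightarrow> 'x set \<Rightarrow> ('x \<Rightarrow> real) set
     \<Rightarrow> 'i \<Rightarrow> ('a \<Rightarrow> 'x) set" where
  "to_mor0 lam0 F X FX i = bmor (lam0 i) (F i) X FX"

definition to_transp :: "('i \<Rightarrow> 'a set) \<Rightarrow> ('i \<Rightarrow> 'i \<Rightarrow> 'a \<Rightarrow> 'a)
     \<Rightarrow> 'i \<Rightarrow> 'i \<Rightarrow> ('a \<Rightarrow> 'x) \<Rightarrow> ('a \<Rightarrow> 'x)" where
  "to_transp lam0 lam j i \<phi> = (\<lambda>x\<in>lam0 i. \<phi> (lam i j x))"

definition to_top :: "('i \<Rightarrow> 'a set) \<Rightarrow> ('i \<Rightarrow> ('a \<Rightarrow> real) set) \<Rightarrow> 'x set \<Rightarrow> ('x \<Rightarrow> real) set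
     \<Rightarrow> 'i \<Rightarrow> (('a \<Rightarrow> 'x) \<Rightarrow> real) set" where
  "to_top lam0 F X FX i = exp_top (lam0 i) (F i) X FX"

end

theory Submission
  imports Defs
begin


lemma ext_top: "bishop_topology Y (extensional Y :: ('a \<Rightarrow> real) set)"
  unfolding bishop_topology_def by auto

lemma gen_in_bigvee: "g \<in> G0 \<Longrightarrow> g \<in> bigvee Y G0"
  by (auto simp: bigvee_def)

lemma bigvee_top:
  assumes "G0 \<subseteq> extensional Y"
  shows "bishop_topology Y (bigvee Y G0)"
proof -
  have sub: "bigvee Y G0 \<subseteq> extensional Y"
    using ext_top[of Y] assms unfolding bigvee_def by blast
  show ?thesis
    unfolding bishop_topology_def
  proof (intro conjI allI ballI impI)
    show "bigvee Y G0 \<subseteq> extensional Y" by (rule sub)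
  next
    fix c :: real show "(\<lambda>x\<in>Y. c) \<in> bigvee Y G0"
      unfolding bigvee_def bishop_topology_def by blast
  next
    fix f g assume "f \<in> bigvee Y G0" "g \<in> bigvee Y G0"
    then show "(\<lambda>x\<in>Y. f x + g x) \<in> bigvee Y G0"
      unfolding bigvee_def bishop_topology_def by blast
  next
    fix f \<phi> assume "f \<in> bigvee Y G0" "bishop_cont \<phi>"
    then show "(\<lambda>x\<in>Y. \<phi> (f x)) \<in> bigvee Y G0"
      unfolding bigvee_def bishop_topology_def by blast
  next
    fix f assume H: "f \<in> extensional Y \<and> (\<forall>e>0. \<exists>g\<in>bigvee Y G0. \<forall>x\<in>Y. \<bar>f x - g x\<bar> \<le> e)"
    show "f \<in> bigvee Y G0"
      unfolding bigvee_def
    proof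
      fix T assume T: "T \<in> {F. bishop_topology Y F \<and> G0 \<subseteq> F}"
      have "bigvee Y G0 \<subseteq> T" using T unfolding bigvee_def by blast
      then have "\<forall>e>0. \<exists>g\<in>T. \<forall>x\<in>Y. \<bar>f x - g x\<bar> \<le> e" using H by blast
      then show "f \<in> T" using T H unfolding bishop_topology_def by blast
    qed
  qed
qed

lemma bigvee_lift:
  assumes top: "bishop_topology X F" and hY: "\<forall>x\<in>X. h x \<in> Y"
    and ext: "G0 \<subseteq> extensional Y"
    and gen: "\<forall>g\<in>G0. (\<lambda>x\<in>X. g (h x)) \<in> F"
    and u: "u \<in> bigvee Y G0"
  shows "(\<lambda>x\<in>X. u (h x)) \<in> F"
proof -
  define T where "T = {u \<in> extensional Y. (\<lambda>x\<in>X. u (h x)) \<in> F}"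
  have "bishop_topology Y T"
    unfolding bishop_topology_def
  proof (intro conjI allI ballI impI)
    show "T \<subseteq> extensional Y" unfolding T_def by blast
  next
    fix c :: real
    have "(\<lambda>x\<in>X. (\<lambda>y\<in>Y. c) (h x)) = (\<lambda>x\<in>X. c)"
      by (rule restrict_ext) (simp add: hY)
    then show "(\<lambda>x\<in>Y. c) \<in> T" unfolding T_def using top
      unfolding bishop_topology_def by auto
  next
    fix f g assume f: "f \<in> T" and g: "g \<in> T"
    have "(\<lambda>x\<in>X. (\<lambda>y\<in>Y. f y + g y) (h x)) =
          (\<lambda>x\<in>X. (\<lambda>x\<in>X. f (h x)) x + (\<lambda>x\<in>X. g (h x)) x)"
      by (rule restrict_ext) (simp add: hY)
    moreover have "(\<lambda>x\<in>X. (\<lambda>x\<in>X. f (h x)) x + (\<lambda>x\<in>X. g (h x)) x) \<in> F"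
      using f g top unfolding T_def bishop_topology_def by blast
    ultimately show "(\<lambda>x\<in>Y. f x + g x) \<in> T" unfolding T_def by simp
  next
    fix f \<phi> assume f: "f \<in> T" and p: "bishop_cont \<phi>"
    have "(\<lambda>x\<in>X. (\<lambda>y\<in>Y. \<phi> (f y)) (h x)) =
          (\<lambda>x\<in>X. \<phi> ((\<lambda>x\<in>X. f (h x)) x))"
      by (rule restrict_ext) (simp add: hY)
    moreover have "(\<lambda>x\<in>X. \<phi> ((\<lambda>x\<in>X. f (h x)) x)) \<in> F"
      using f p top unfolding T_def bishop_topology_def by blast
    ultimately show "(\<lambda>x\<in>Y. \<phi> (f x)) \<in> T" unfolding T_def by simp
  next
    fix f assume H: "f \<in> extensional Y \<and> (\<forall>e>0. \<exists>g\<in>T. \<forall>x\<in>Y. \<bar>f x - g x\<bar> \<le> e)"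
    have "\<forall>e>0. \<exists>g\<in>F. \<forall>x\<in>X. \<bar>(\<lambda>x\<in>X. f (h x)) x - g x\<bar> \<le> e"
    proof (intro allI impI)
      fix e :: real assume "e > 0"
      then obtain g where g: "g \<in> T" "\<forall>x\<in>Y. \<bar>f x - g x\<bar> \<le> e" using H by blast
      then show "\<exists>g\<in>F. \<forall>x\<in>X. \<bar>(\<lambda>x\<in>X. f (h x)) x - g x\<bar> \<le> e"
        by (intro bexI[of _ "\<lambda>x\<in>X. g (h x)"]) (auto simp: T_def hY)
    qed
    then have "(\<lambda>x\<in>X. f (h x)) \<in> F"
      using top unfolding bishop_topology_def by auto
    then show "f \<in> T" using H unfolding T_def by blast
  qed
  moreover have "G0 \<subseteq> T" using ext gen unfolding T_def by blast
  ultimately have "bigvee Y G0 \<subseteq> T" unfolding bigvee_def by blast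
  then show ?thesis using u unfolding T_def by blast
qed



locale spec =
  fixes I :: "'i set" and le :: "'i \<Rightarrow> 'i \<Rightarrow> bool"
    and lam0 :: "'i \<Rightarrow> 'a set" and lam :: "'i \<Rightarrow> 'i \<Rightarrow> 'a \<Rightarrow> 'a"
    and F :: "'i \<Rightarrow> ('a \<Rightarrow> real) set"
  assumes dir: "directed_set I le"
    and ds: "direct_spectrum I le lam0 lam F"
begin

abbreviation "R \<equiv> dl_rel I le lam0 lam"
abbreviation "C \<equiv> dirlim_carrier I le lam0 lam"
definition cls where "cls i x = R `` {(i, x)}"

lemma le_refl: "i \<in> I \<Longrightarrow> le i i" using dir unfolding directed_set_def by blast
lemma le_trans: "i \<in> I \<Longrightarrow> j \<in> I \<Longrightarrow> k \<in> I \<Longrightarrow> le i j \<Longrightarrow> le j k \<Longrightarrow> le i k"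
  using dir unfolding directed_set_def by blast
lemma upper: "i \<in> I \<Longrightarrow> j \<in> I \<Longrightarrow> \<exists>k\<in>I. le i k \<and> le j k"
  using dir unfolding directed_set_def by blast
lemma lam_in: "i \<in> I \<Longrightarrow> j \<in> I \<Longrightarrow> le i j \<Longrightarrow> x \<in> lam0 i \<Longrightarrow> lam i j x \<in> lam0 j"
  using ds unfolding direct_spectrum_def direct_family_def by blast
lemma lam_id: "i \<in> I \<Longrightarrow> x \<in> lam0 i \<Longrightarrow> lam i i x = x"
  using ds unfolding direct_spectrum_def direct_family_def by auto
lemma lam_comp: "i \<in> I \<Longrightarrow> j \<in> I \<Longrightarrow> k \<in> I \<Longrightarrow> le i j \<Longrightarrow> le j k \<Longrightarrow> x \<in> lam0 i
   \<Longrightarrow> lam i k x = lam j k (lam i j x)"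
proof -
  assume a: "i \<in> I" "j \<in> I" "k \<in> I" "le i j" "le j k" "x \<in> lam0 i"
  then have "lam i k = (\<lambda>x\<in>lam0 i. lam j k (lam i j x))"
    using ds unfolding direct_spectrum_def direct_family_def by blast
  then show ?thesis using a by simp
qed
lemma Ftop: "i \<in> I \<Longrightarrow> bishop_topology (lam0 i) (F i)"
  using ds unfolding direct_spectrum_def by blast

lemma R_iff: "((i, x), (j, y)) \<in> R \<longleftrightarrow> i \<in> I \<and> x \<in> lam0 i \<and> j \<in> I \<and> y \<in> lam0 j \<and>
     (\<exists>k\<in>I. le i k \<and> le j k \<and> lam i k x = lam j k y)"
  unfolding dl_rel_def by auto

lemma equivR: "equiv (Sigma I lam0) R"
proof (rule equivI)
  show "R \<subseteq> Sigma I lam0 \<times> Sigma I lam0" unfolding dl_rel_def by auto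
  show "refl_on (Sigma I lam0) R"
    unfolding refl_on_def by (auto simp: R_iff intro: le_refl)
  show "sym R" unfolding sym_def by (auto simp: R_iff)
  show "trans R" unfolding trans_def
  proof (intro allI impI)
    fix a b c assume ab: "(a, b) \<in> R" and bc: "(b, c) \<in> R"
    obtain i x where a: "a = (i, x)" by force
    obtain j y where b: "b = (j, y)" by force
    obtain l z where c: "c = (l, z)" by force
    from ab bc obtain k1 k2 where
      H: "i \<in> I" "x \<in> lam0 i" "j \<in> I" "y \<in> lam0 j" "l \<in> I" "z \<in> lam0 l"
      "k1 \<in> I" "le i k1" "le j k1" "lam i k1 x = lam j k1 y"
      "k2 \<in> I" "le j k2" "le l k2" "lam j k2 y = lam l k2 z"
      unfolding a b c R_iff by blast
    obtain k where k: "k \<in> I" "le k1 k" "le k2 k" using upper[OF H(7) H(11)] by blast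
    have "lam i k x = lam k1 k (lam i k1 x)" using H k by (intro lam_comp) auto
    also have "\<dots> = lam k1 k (lam j k1 y)" using H by simp
    also have "\<dots> = lam j k y" using H k by (intro lam_comp[symmetric]) auto
    also have "\<dots> = lam k2 k (lam j k2 y)" using H k by (intro lam_comp) auto
    also have "\<dots> = lam k2 k (lam l k2 z)" using H by simp
    also have "\<dots> = lam l k z" using H k by (intro lam_comp[symmetric]) auto
    finally show "(a, c) \<in> R" unfolding a c R_iff using H k
      by (meson le_trans)
  qed
qed

lemma cls_in: "i \<in> I \<Longrightarrow> x \<in> lam0 i \<Longrightarrow> cls i x \<in> C"
  unfolding cls_def dirlim_carrier_def by (rule quotientI) auto

lemma C_cases: assumes "c \<in> C" obtains i x where "i \<in> I" "x \<in> lam0 i" "c = cls i x"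
  using assms unfolding dirlim_carrier_def cls_def by (auto elim!: quotientE)

lemma cls_eq: "i \<in> I \<Longrightarrow> j \<in> I \<Longrightarrow> le i j \<Longrightarrow> x \<in> lam0 i \<Longrightarrow> cls i x = cls j (lam i j x)"
  unfolding cls_def
  by (rule equiv_class_eq[OF equivR]) (auto simp: R_iff lam_in lam_id le_refl intro!: bexI[of _ j])

definition compat :: "('i \<Rightarrow> 'a \<Rightarrow> 'r) \<Rightarrow> bool" where
  "compat A \<longleftrightarrow> (\<forall>i\<in>I. \<forall>j\<in>I. le i j \<longrightarrow> (\<forall>x\<in>lam0 i. A i x = A j (lam i j x)))"

lemma compat_R: assumes "compat A" "((i, x), (j, y)) \<in> R" shows "A i x = A j y"
proof -
  from assms(2) obtain k where H: "i \<in> I" "x \<in> lam0 i" "j \<in> I" "y \<in> lam0 j" "k \<in> I"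
    "le i k" "le j k" "lam i k x = lam j k y" unfolding R_iff by blast
  have "A i x = A k (lam i k x)" using assms(1) H unfolding compat_def by blast
  also have "\<dots> = A k (lam j k y)" using H by simp
  also have "\<dots> = A j y" using assms(1) H unfolding compat_def by metis
  finally show ?thesis .
qed

lemma the_elem_cls: assumes "compat A" "i \<in> I" "x \<in> lam0 i"
  shows "the_elem ((\<lambda>(j, y). A j y) ` cls i x) = A i x"
proof -
  have "(i, x) \<in> cls i x" unfolding cls_def using equiv_class_self[OF equivR] assms by auto
  moreover have "\<forall>p\<in>cls i x. (\<lambda>(j, y). A j y) p = A i x"
  proof
    fix p assume p: "p \<in> cls i x"
    obtain j y where pj: "p = (j, y)" by force
    then have "((i, x), (j, y)) \<in> R" using p unfolding cls_def by simp
    then have "A i x = A j y" by (rule compat_R[OF assms(1)])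
    then show "(\<lambda>(j, y). A j y) p = A i x" using pj by simp
  qed
  ultimately have "(\<lambda>(j, y). A j y) ` cls i x = {A i x}" by force
  then show ?thesis by simp
qed

lemma eql_f_cls: "compat A \<Longrightarrow> i \<in> I \<Longrightarrow> x \<in> lam0 i \<Longrightarrow> eql_f C A (cls i x) = A i x"
  unfolding eql_f_def using cls_in the_elem_cls by simp

lemma dprod_compat: "\<Theta> \<in> dprod_top I le lam0 lam F \<Longrightarrow> compat \<Theta>"
  unfolding compat_def
proof (intro ballI impI)
  fix i j x assume a: "\<Theta> \<in> dprod_top I le lam0 lam F" "i \<in> I" "j \<in> I" "le i j" "x \<in> lam0 i"
  then have "\<Theta> i = (\<lambda>x\<in>lam0 i. \<Theta> j (lam i j x))" unfolding dprod_top_def by blast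
  then show "\<Theta> i x = \<Theta> j (lam i j x)" using a by simp
qed

lemma gens_ext: "{eql_f C \<Theta> | \<Theta>. \<Theta> \<in> dprod_top I le lam0 lam F} \<subseteq> extensional C"
  unfolding eql_f_def by auto

lemma cls_mor: assumes "i \<in> I" "u \<in> dirlim_top I le lam0 lam F"
  shows "(\<lambda>x\<in>lam0 i. u (cls i x)) \<in> F i"
proof -
  have "\<forall>g\<in>{eql_f C \<Theta> | \<Theta>. \<Theta> \<in> dprod_top I le lam0 lam F}. (\<lambda>x\<in>lam0 i. g (cls i x)) \<in> F i"
  proof
    fix g assume "g \<in> {eql_f C \<Theta> | \<Theta>. \<Theta> \<in> dprod_top I le lam0 lam F}"
    then obtain \<Theta> where T: "\<Theta> \<in> dprod_top I le lam0 lam F" "g = eql_f C \<Theta>" by blast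
    have "(\<lambda>x\<in>lam0 i. g (cls i x)) = (\<lambda>x\<in>lam0 i. \<Theta> i x)"
      using T dprod_compat eql_f_cls assms(1) by (intro restrict_ext) auto
    also have "\<dots> = \<Theta> i"
    proof -
      have "\<Theta> i \<in> F i" using T assms unfolding dprod_top_def by blast
      then have "\<Theta> i \<in> extensional (lam0 i)" using Ftop[OF assms(1)] unfolding bishop_topology_def by blast
      then show ?thesis by (simp add: extensional_restrict)
    qed
    finally show "(\<lambda>x\<in>lam0 i. g (cls i x)) \<in> F i"
      using T assms unfolding dprod_top_def by auto
  qed
  then show ?thesis
    using bigvee_lift[OF Ftop[OF assms(1)] _ gens_ext _ assms(2)[unfolded dirlim_top_def]]
      cls_in[OF assms(1)] by blast
qed

end



lemma bmor_iff: "h \<in> bmor X F Y G \<longleftrightarrow> h \<in> X \<rightarrow>\<^sub>E Y \<and> (\<forall>g\<in>G. (\<lambda>x\<in>X. g (h x)) \<in> F)"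
  by (simp add: bmor_def)

theorem theorem11p3:
  fixes I :: "'i set" and le :: "'i \<Rightarrow> 'i \<Rightarrow> bool"
    and lam0 :: "'i \<Rightarrow> 'a set" and lam :: "'i \<Rightarrow> 'i \<Rightarrow> 'a \<Rightarrow> 'a"
    and F :: "'i \<Rightarrow> ('a \<Rightarrow> real) set"
    and X :: "'x set" and FX :: "('x \<Rightarrow> real) set"
  assumes "directed_set I le"
    and "direct_spectrum I le lam0 lam F"
    and "bishop_topology X FX"
  shows "bishop_isomorphic
     (invlim_carrier I le (to_mor0 lam0 F X FX) (to_transp lam0 lam))
     (invlim_top I le (to_mor0 lam0 F X FX) (to_transp lam0 lam) (to_top lam0 F X FX))
     (bmor (dirlim_carrier I le lam0 lam) (dirlim_top I le lam0 lam F) X FX)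
     (exp_top (dirlim_carrier I le lam0 lam) (dirlim_top I le lam0 lam F) X FX)"
proof -
  interpret spec I le lam0 lam F using assms(1,2) by unfold_locales
  define M0 where "M0 = to_mor0 lam0 F X FX"
  define tr :: "'i \<Rightarrow> 'i \<Rightarrow> ('a \<Rightarrow> 'x) \<Rightarrow> ('a \<Rightarrow> 'x)" where "tr = to_transp lam0 lam"
  define IL where "IL = invlim_carrier I le M0 tr"
  define ILT where "ILT = invlim_top I le M0 tr (to_top lam0 F X FX)"
  define DT where "DT = dirlim_top I le lam0 lam F"
  define M where "M = bmor C DT X FX"
  define MT where "MT = exp_top C DT X FX"
  define h where "h = (\<lambda>\<Phi>\<in>IL. \<lambda>c\<in>C. the_elem ((\<lambda>(i, x). \<Phi> i x) ` c))"
  define Pm :: "(('i \<times> 'a) set \<Rightarrow> 'x) \<Rightarrow> 'i \<Rightarrow> 'a \<Rightarrow> 'x" where "Pm = (\<lambda>m. \<lambda>i\<in>I. \<lambda>x\<in>lam0 i. m (cls i x))"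

  have M0i: "M0 i = bmor (lam0 i) (F i) X FX" for i
    unfolding M0_def to_mor0_def by simp
  have IL_iff: "\<Phi> \<in> IL \<longleftrightarrow> \<Phi> \<in> (\<Pi>\<^sub>E i\<in>I. M0 i) \<and>
     (\<forall>i\<in>I. \<forall>j\<in>I. le i j \<longrightarrow> \<Phi> i = (\<lambda>x\<in>lam0 i. \<Phi> j (lam i j x)))" for \<Phi>
    unfolding IL_def invlim_carrier_def tr_def to_transp_def by simp
  have IL_Mi: "\<Phi> i \<in> bmor (lam0 i) (F i) X FX" if "\<Phi> \<in> IL" "i \<in> I" for \<Phi> i
    using that unfolding IL_iff M0i by auto
  have IL_compat: "compat \<Phi>" if "\<Phi> \<in> IL" for \<Phi>
    unfolding compat_def
  proof (intro ballI impI)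
    fix i j x assume a: "i \<in> I" "j \<in> I" "le i j" "x \<in> lam0 i"
    then have "\<Phi> i = (\<lambda>x\<in>lam0 i. \<Phi> j (lam i j x))" using that unfolding IL_iff by blast
    then show "\<Phi> i x = \<Phi> j (lam i j x)" using a by simp
  qed
  have h_cls: "h \<Phi> (cls i x) = \<Phi> i x" if "\<Phi> \<in> IL" "i \<in> I" "x \<in> lam0 i" for \<Phi> i x
    using that the_elem_cls[OF IL_compat[OF that(1)] that(2,3)] cls_in[OF that(2,3)] unfolding h_def by simp
  have h_M: "h \<Phi> \<in> M" if P: "\<Phi> \<in> IL" for \<Phi>
    unfolding M_def bmor_iff
  proof
    have "h \<Phi> \<in> extensional C" using P unfolding h_def eql_f_def by simp
    moreover have "h \<Phi> c \<in> X" if "c \<in> C" for c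
    proof -
      obtain i x where c: "i \<in> I" "x \<in> lam0 i" "c = cls i x" by (rule C_cases[OF \<open>c \<in> C\<close>])
      have "\<Phi> i x \<in> X" using IL_Mi[OF P c(1)] c(2) unfolding bmor_iff by auto
      then show ?thesis using h_cls[OF P c(1,2)] c(3) by simp
    qed
    ultimately show "h \<Phi> \<in> C \<rightarrow>\<^sub>E X" by (auto simp: PiE_iff)
  next
    show "\<forall>g\<in>FX. (\<lambda>x\<in>C. g (h \<Phi> x)) \<in> DT"
    proof
      fix g assume g: "g \<in> FX"
      define \<Theta> where "\<Theta> = (\<lambda>i. \<lambda>x\<in>lam0 i. g (\<Phi> i x))"
      have T: "\<Theta> \<in> dprod_top I le lam0 lam F"
        unfolding dprod_top_def
      proof (intro CollectI conjI ballI impI)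
        fix i assume "i \<in> I"
        then show "\<Theta> i \<in> F i" using IL_Mi[OF P] g unfolding bmor_iff \<Theta>_def by blast
      next
        fix i j assume a: "i \<in> I" "j \<in> I" "le i j"
        show "\<Theta> i = (\<lambda>x\<in>lam0 i. \<Theta> j (lam i j x))"
          unfolding \<Theta>_def
        proof (rule restrict_ext)
          fix x assume "x \<in> lam0 i"
          then show "g (\<Phi> i x) = (\<lambda>x\<in>lam0 j. g (\<Phi> j x)) (lam i j x)"
            using a lam_in IL_compat[OF P] unfolding compat_def by simp
        qed
      qed
      have "(\<lambda>c\<in>C. g (h \<Phi> c)) = (\<lambda>c\<in>C. eql_f C \<Theta> c)"
      proof (rule restrict_ext)
        fix c assume "c \<in> C"
        obtain i x where c: "i \<in> I" "x \<in> lam0 i" "c = cls i x" by (rule C_cases[OF \<open>c \<in> C\<close>])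
        show "g (h \<Phi> c) = eql_f C \<Theta> c"
          using c h_cls[OF P c(1,2)] eql_f_cls[OF dprod_compat[OF T] c(1,2)]
          unfolding \<Theta>_def by simp
      qed
      also have "\<dots> = eql_f C \<Theta>" unfolding eql_f_def by (rule restrict_ext) simp
      finally show "(\<lambda>c\<in>C. g (h \<Phi> c)) \<in> DT"
        unfolding DT_def dirlim_top_def using T by (auto intro: gen_in_bigvee)
    qed
  qed
  have Pm_M0: "(\<lambda>x\<in>lam0 i. m (cls i x)) \<in> bmor (lam0 i) (F i) X FX" if m: "m \<in> M" and i: "i \<in> I" for m i
    unfolding bmor_iff
  proof
    show "(\<lambda>x\<in>lam0 i. m (cls i x)) \<in> lam0 i \<rightarrow>\<^sub>E X"
      using m cls_in[OF i] unfolding M_def bmor_iff by auto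
    show "\<forall>g\<in>FX. (\<lambda>x\<in>lam0 i. g ((\<lambda>x\<in>lam0 i. m (cls i x)) x)) \<in> F i"
    proof
      fix g assume g: "g \<in> FX"
      then have u: "(\<lambda>c\<in>C. g (m c)) \<in> DT" using m unfolding M_def bmor_iff by blast
      have "(\<lambda>x\<in>lam0 i. g ((\<lambda>x\<in>lam0 i. m (cls i x)) x)) = (\<lambda>x\<in>lam0 i. (\<lambda>c\<in>C. g (m c)) (cls i x))"
        using cls_in[OF i] by (intro restrict_ext) simp
      then show "(\<lambda>x\<in>lam0 i. g ((\<lambda>x\<in>lam0 i. m (cls i x)) x)) \<in> F i"
        using cls_mor[OF i u[unfolded DT_def]] by simp
    qed
  qed
  have Pm_IL: "Pm m \<in> IL" if m: "m \<in> M" for m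
    unfolding IL_iff
  proof
    show "Pm m \<in> (\<Pi>\<^sub>E i\<in>I. M0 i)" unfolding Pm_def M0i using Pm_M0[OF m] by auto
    show "\<forall>i\<in>I. \<forall>j\<in>I. le i j \<longrightarrow> Pm m i = (\<lambda>x\<in>lam0 i. Pm m j (lam i j x))"
    proof (intro ballI impI)
      fix i j assume a: "i \<in> I" "j \<in> I" "le i j"
      show "Pm m i = (\<lambda>x\<in>lam0 i. Pm m j (lam i j x))"
        unfolding Pm_def using a
        by (auto intro!: restrict_ext simp: lam_in cls_eq)
    qed
  qed
  have h_Pm: "h (Pm m) = m" if m: "m \<in> M" for m
  proof
    fix c
    show "h (Pm m) c = m c"
    proof (cases "c \<in> C")
      case True
      obtain i x where c: "i \<in> I" "x \<in> lam0 i" "c = cls i x" by (rule C_cases[OF \<open>c \<in> C\<close>])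
      then show ?thesis using h_cls[OF Pm_IL[OF m] c(1,2)] unfolding Pm_def by simp
    next
      case False
      have "m c = undefined" using m False unfolding M_def bmor_iff by (auto simp: PiE_iff extensional_def)
      moreover have "h (Pm m) c = undefined" using False Pm_IL[OF m] unfolding h_def eql_f_def by simp
      ultimately show ?thesis by simp
    qed
  qed
  have inj: "inj_on h IL"
  proof (rule inj_onI)
    fix \<Phi> \<Psi> assume P: "\<Phi> \<in> IL" and Q: "\<Psi> \<in> IL" and e: "h \<Phi> = h \<Psi>"
    show "\<Phi> = \<Psi>"
    proof
      fix i show "\<Phi> i = \<Psi> i"
      proof (cases "i \<in> I")
        case True
        show ?thesis
        proof
          fix x show "\<Phi> i x = \<Psi> i x"
          proof (cases "x \<in> lam0 i")
            case True
            then show ?thesis using h_cls[OF P \<open>i \<in> I\<close> True] h_cls[OF Q \<open>i \<in> I\<close> True] e by simp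
          next
            case False
            then show ?thesis using IL_Mi[OF P \<open>i \<in> I\<close>] IL_Mi[OF Q \<open>i \<in> I\<close>]
              unfolding bmor_iff by (auto simp: PiE_iff extensional_def)
          qed
        qed
      next
        case False
        then show ?thesis using P Q unfolding IL_iff by (auto simp: PiE_iff extensional_def)
      qed
    qed
  qed
  have bij: "bij_betw h IL M"
  proof (rule bij_betw_imageI[OF inj])
    show "h ` IL = M"
    proof
      show "h ` IL \<subseteq> M" using h_M by blast
      show "M \<subseteq> h ` IL" using h_Pm Pm_IL by (metis image_eqI subsetI)
    qed
  qed
  have inv: "inv_into IL h m = Pm m" if "m \<in> M" for m
    using inv_into_f_f[OF inj Pm_IL[OF that]] h_Pm[OF that] by simp

  have ILT_top: "bishop_topology IL ILT"
    unfolding ILT_def invlim_top_def IL_def[symmetric] by (rule bigvee_top) auto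
  have MT_top: "bishop_topology M MT"
    unfolding MT_def exp_top_def M_def[symmetric] by (rule bigvee_top) auto
  have gen_ILT: "(\<lambda>\<Phi>\<in>IL. g' (\<Phi> i)) \<in> ILT" if "i \<in> I" "g' \<in> to_top lam0 F X FX i" for i g'
    unfolding ILT_def invlim_top_def IL_def[symmetric] using that by (auto intro: gen_in_bigvee)
  have gen_MT: "(\<lambda>m\<in>M. g (m c)) \<in> MT" if "c \<in> C" "g \<in> FX" for c g
    unfolding MT_def exp_top_def M_def[symmetric] using that by (auto intro: gen_in_bigvee)

  have h_mor: "h \<in> bmor IL ILT M MT"
    unfolding bmor_iff
  proof
    show "h \<in> IL \<rightarrow>\<^sub>E M" using h_M unfolding h_def by auto
    show "\<forall>u\<in>MT. (\<lambda>x\<in>IL. u (h x)) \<in> ILT"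
    proof
      fix u assume u: "u \<in> MT"
      show "(\<lambda>x\<in>IL. u (h x)) \<in> ILT"
      proof (rule bigvee_lift[OF ILT_top _ _ _ u[unfolded MT_def exp_top_def M_def[symmetric]]])
        show "\<forall>x\<in>IL. h x \<in> M" using h_M by blast
        show "{\<lambda>h\<in>M. g (h x) |x g. x \<in> C \<and> g \<in> FX} \<subseteq> extensional M" by auto
        show "\<forall>ga\<in>{\<lambda>h\<in>M. g (h x) |x g. x \<in> C \<and> g \<in> FX}. (\<lambda>x\<in>IL. ga (h x)) \<in> ILT"
        proof
          fix ga assume "ga \<in> {\<lambda>h\<in>M. g (h x) |x g. x \<in> C \<and> g \<in> FX}"
          then obtain c g where cg: "c \<in> C" "g \<in> FX" "ga = (\<lambda>h\<in>M. g (h c))" by blast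
          obtain i x where c: "i \<in> I" "x \<in> lam0 i" "c = cls i x" using cg(1) by (rule C_cases)
          define g' where "g' = (\<lambda>m\<in>M0 i. g (m x))"
          have g': "g' \<in> to_top lam0 F X FX i"
            unfolding to_top_def exp_top_def g'_def M0i[symmetric] using c cg
            by (intro gen_in_bigvee) blast
          have "(\<lambda>\<Phi>\<in>IL. ga (h \<Phi>)) = (\<lambda>\<Phi>\<in>IL. g' (\<Phi> i))"
          proof (rule restrict_ext)
            fix \<Phi> assume P: "\<Phi> \<in> IL"
            show "ga (h \<Phi>) = g' (\<Phi> i)"
              using cg(3) h_M[OF P] h_cls[OF P c(1,2)] c(3) IL_Mi[OF P c(1)]
              unfolding g'_def M0i by simp
          qed
          then show "(\<lambda>\<Phi>\<in>IL. ga (h \<Phi>)) \<in> ILT" using gen_ILT[OF c(1) g'] by simp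
        qed
      qed
    qed
  qed

  define k where "k = (\<lambda>m\<in>M. inv_into IL h m)"
  have k_mor: "k \<in> bmor M MT IL ILT"
    unfolding bmor_iff
  proof
    show "k \<in> M \<rightarrow>\<^sub>E IL" unfolding k_def using inv Pm_IL by auto
    show "\<forall>u\<in>ILT. (\<lambda>x\<in>M. u (k x)) \<in> MT"
    proof
      fix u assume u: "u \<in> ILT"
      show "(\<lambda>x\<in>M. u (k x)) \<in> MT"
      proof (rule bigvee_lift[OF MT_top _ _ _ u[unfolded ILT_def invlim_top_def IL_def[symmetric]]])
        show "\<forall>x\<in>M. k x \<in> IL" unfolding k_def using inv Pm_IL by auto
        show "{\<lambda>\<Phi>\<in>IL. g (\<Phi> i) |i g. i \<in> I \<and> g \<in> to_top lam0 F X FX i} \<subseteq> extensional IL" by auto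
        show "\<forall>ga\<in>{\<lambda>\<Phi>\<in>IL. g (\<Phi> i) |i g. i \<in> I \<and> g \<in> to_top lam0 F X FX i}. (\<lambda>x\<in>M. ga (k x)) \<in> MT"
        proof
          fix ga assume "ga \<in> {\<lambda>\<Phi>\<in>IL. g (\<Phi> i) |i g. i \<in> I \<and> g \<in> to_top lam0 F X FX i}"
          then obtain i g' where ig: "i \<in> I" "g' \<in> to_top lam0 F X FX i" "ga = (\<lambda>\<Phi>\<in>IL. g' (\<Phi> i))"
            by blast
          have "(\<lambda>m\<in>M. ga (k m)) = (\<lambda>m\<in>M. g' ((\<lambda>x\<in>lam0 i. m (cls i x))))"
          proof (rule restrict_ext)
            fix m assume m: "m \<in> M"
            show "ga (k m) = g' (\<lambda>x\<in>lam0 i. m (cls i x))"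
              using ig(1,3) m inv[OF m] Pm_IL[OF m] unfolding k_def Pm_def by simp
          qed
          also have "\<dots> \<in> MT"
          proof (rule bigvee_lift[OF MT_top _ _ _ ig(2)[unfolded to_top_def exp_top_def]])
            show "\<forall>m\<in>M. (\<lambda>x\<in>lam0 i. m (cls i x)) \<in> bmor (lam0 i) (F i) X FX"
              using Pm_M0 ig(1) by blast
            show "{\<lambda>h\<in>bmor (lam0 i) (F i) X FX. g (h x) |x g. x \<in> lam0 i \<and> g \<in> FX}
                \<subseteq> extensional (bmor (lam0 i) (F i) X FX)" by auto
            show "\<forall>ga\<in>{\<lambda>h\<in>bmor (lam0 i) (F i) X FX. g (h x) |x g. x \<in> lam0 i \<and> g \<in> FX}.
                (\<lambda>m\<in>M. ga (\<lambda>x\<in>lam0 i. m (cls i x))) \<in> MT"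
            proof
              fix gb assume "gb \<in> {\<lambda>h\<in>bmor (lam0 i) (F i) X FX. g (h x) |x g. x \<in> lam0 i \<and> g \<in> FX}"
              then obtain x g where xg: "x \<in> lam0 i" "g \<in> FX" "gb = (\<lambda>h\<in>bmor (lam0 i) (F i) X FX. g (h x))"
                by blast
              have "(\<lambda>m\<in>M. gb (\<lambda>x\<in>lam0 i. m (cls i x))) = (\<lambda>m\<in>M. g (m (cls i x)))"
                using xg Pm_M0 ig(1) by (intro restrict_ext) simp
              then show "(\<lambda>m\<in>M. gb (\<lambda>x\<in>lam0 i. m (cls i x))) \<in> MT"
                using gen_MT[OF cls_in[OF ig(1) xg(1)] xg(2)] by simp
            qed
          qed
          finally show "(\<lambda>m\<in>M. ga (k m)) \<in> MT" .
        qed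
      qed
    qed
  qed
  have "bishop_iso IL ILT M MT h"
    unfolding bishop_iso_def using h_mor bij k_mor unfolding k_def by blast
  then show ?thesis
    unfolding bishop_isomorphic_def IL_def ILT_def M_def MT_def M0_def tr_def DT_def by blast
qed

end
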